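(* Let $n\ge 2$ be an integer. Let $f(z)=\sum_{j\ge 1} b_j z^j$ be analytic in the unit disc $\mathbb{D}$ with $b_j\ge 0$ for all $j\ge 1$ and $\|f\|_{\mathcal{B}}\le 1$, and suppose $f$ is extremal for the restricted problem $$\sup\Big\{ \mathcal{F}_n(g)=\sum_{k=1}^n k|c_k|^2 \,:\, \|g\|_{\mathcal{B}}\le 1,\ g(z)=\sum_{k=1}^\infty c_k z^k,\ c_j\ge 0 \text{ for all } j\ge 1\Big\},$$ i.e. $f$ attains this supremum. If $1\le k<m\le n$ and $b_k>0$, then $$ b_m\le \frac{m-k}{2m}\, b_k. $$
   Context: $\mathbb{D}$ is the open unit disc in $\mathbb{C}$. The Bloch space $\mathcal{B}$ consists of analytic functions $f$ on $\mathbb{D}$ with finite norm $\|f\|_{\mathcal{B}}=|f(0)|+\sup_{z\in\mathbb{D}}(1-|z|^2)|f'(z)|$. *)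

theory Defs
  imports "HOL-Complex_Analysis.Complex_Analysis"
begin

definition taylor_coeff :: "(complex \<Rightarrow> complex) \<Rightarrow> nat \<Rightarrow> complex" where
  "taylor_coeff g k = (deriv ^^ k) g 0 / of_nat (fact k)"

definition bloch_norm :: "(complex \<Rightarrow> complex) \<Rightarrow> ereal" where
  "bloch_norm g = ereal (norm (g 0)) +
     (SUP z\<in>ball 0 1. ereal ((1 - (norm z)\<^sup>2) * norm (deriv g z)))"

definition admissible :: "(complex \<Rightarrow> complex) \<Rightarrow> bool" where
  "admissible g \<longleftrightarrow> g holomorphic_on ball 0 1 \<and> g 0 = 0 \<and>
     (\<forall>j\<ge>1. taylor_coeff g j \<in> \<real> \<and> 0 \<le> Re (taylor_coeff g j)) \<and>
     bloch_norm g \<le> 1"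

definition F_fun :: "nat \<Rightarrow> (complex \<Rightarrow> complex) \<Rightarrow> real" where
  "F_fun n g = (\<Sum>k=1..n. real k * (norm (taylor_coeff g k))\<^sup>2)"

end

theory Submission
  imports Defs
begin

lemma tc_expansion:
  assumes "f holomorphic_on ball 0 1"
  shows "f has_fps_expansion fps_expansion f 0"
    and "\<And>j. fps_nth (fps_expansion f 0) j = taylor_coeff f j"
proof -
  show h: "f has_fps_expansion fps_expansion f 0"
    using assms by (intro has_fps_expansion_fps_expansion[of "ball 0 1"]) auto
  fix j
  show "fps_nth (fps_expansion f 0) j = taylor_coeff f j"
    using fps_nth_fps_expansion[OF h] by (simp add: taylor_coeff_def)
qed

lemma deriv_series:
  assumes hol: "f holomorphic_on ball 0 1" and w: "w \<in> ball 0 1"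
  shows "(\<lambda>j. of_nat (Suc j) * taylor_coeff f (Suc j) * w ^ j) sums deriv f w"
proof -
  have "deriv f holomorphic_on ball 0 1" using hol by (intro holomorphic_deriv) auto
  from holomorphic_power_series[OF this w]
  have "(\<lambda>j. (deriv ^^ j) (deriv f) 0 / fact j * w ^ j) sums deriv f w" by simp
  moreover have "(deriv ^^ j) (deriv f) 0 / fact j = of_nat (Suc j) * taylor_coeff f (Suc j)" for j
  proof -
    have "(deriv ^^ j) (deriv f) = (deriv ^^ Suc j) f" by (simp add: funpow_Suc_right del: funpow.simps)
    moreover have "(of_nat (fact (Suc j)) :: complex) = of_nat (Suc j) * fact j"
      by (simp only: fact_Suc of_nat_mult of_nat_fact of_nat_id)
    ultimately show ?thesis unfolding taylor_coeff_def
      by (simp del: of_nat_Suc fact_Suc)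
  qed
  ultimately show ?thesis by simp
qed

theorem lemma2p1:
  fixes n k m :: nat and f :: "complex \<Rightarrow> complex"
  assumes "n \<ge> 2"
    and "admissible f"
    and "\<forall>g. admissible g \<longrightarrow> F_fun n g \<le> F_fun n f"
    and "1 \<le> k" and "k < m" and "m \<le> n"
    and "Re (taylor_coeff f k) > 0"
  shows "Re (taylor_coeff f m) \<le> (real m - real k) / (2 * real m) * Re (taylor_coeff f k)"
proof -
  define b where "b j = Re (taylor_coeff f j)" for j
  define bk where "bk = b k"
  define c where "c = real k * bk / real m"
  have hol: "f holomorphic_on ball 0 1" and f0: "f 0 = 0"
    and coef: "\<And>j. j \<ge> 1 \<Longrightarrow> taylor_coeff f j \<in> \<real> \<and> 0 \<le> Re (taylor_coeff f j)"
    and bn: "bloch_norm f \<le> 1" using assms(2) unfolding admissible_def by auto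
  have tcr: "taylor_coeff f j = of_real (b j)" if "j \<ge> 1" for j
    using coef[OF that] by (simp add: b_def complex_eq_iff complex_is_Real_iff)
  have bnn: "b j \<ge> 0" if "j \<ge> 1" for j using coef[OF that] by (simp add: b_def)
  have kpos: "k > 0" and mpos: "m > 0" and km: "k \<noteq> m" using assms by auto
  have bkpos: "bk > 0" using assms(7) by (simp add: bk_def b_def)
  have cnn: "c \<ge> 0" using bkpos by (simp add: c_def)
  have cm: "c * real m = real k * bk" using mpos by (simp add: c_def)
  define g where "g z = f z - of_real bk * z^k + of_real c * z^m" for z
  have G: "g has_fps_expansion (fps_expansion f 0 - fps_const (of_real bk) * fps_X^k
      + fps_const (of_real c) * fps_X^m)"
    unfolding g_def by (intro has_fps_expansion_add has_fps_expansion_diff has_fps_expansion_cmult_left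
        tc_expansion(1)[OF hol] has_fps_expansion_fps_X_power)
  have tcg: "taylor_coeff g j = taylor_coeff f j - (if j = k then of_real bk else 0)
      + (if j = m then of_real c else 0)" for j
  proof -
    have "taylor_coeff g j = fps_nth (fps_expansion f 0 - fps_const (of_real bk) * fps_X^k
      + fps_const (of_real c) * fps_X^m) j"
      unfolding fps_nth_fps_expansion[OF G] by (simp add: taylor_coeff_def)
    then show ?thesis by (simp add: tc_expansion(2)[OF hol])
  qed
  have holg: "g holomorphic_on ball 0 1" unfolding g_def by (intro holomorphic_intros hol)
  have g0: "g 0 = 0" using f0 kpos mpos by (simp add: g_def power_0_left)
  have coefg: "taylor_coeff g j \<in> \<real> \<and> 0 \<le> Re (taylor_coeff g j)" if "j \<ge> 1" for j
  proof -
    have "taylor_coeff g j = of_real (b j - (if j = k then bk else 0) + (if j = m then c else 0))"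
      using tcr[OF that] by (simp add: tcg)
    moreover have "b j - (if j = k then bk else 0) + (if j = m then c else 0) \<ge> 0"
      using bnn[OF that] cnn km by (auto simp: bk_def)
    ultimately show ?thesis by simp
  qed
  have dg: "deriv g z = deriv f z - of_real bk * of_nat k * z^(k-1) + of_real c * of_nat m * z^(m-1)"
    if "z \<in> ball 0 1" for z
  proof -
    have "(f has_field_derivative deriv f z) (at z)"
      using holomorphic_derivI[OF hol _ that] by auto
    then have "(g has_field_derivative (deriv f z - of_real bk * (of_nat k * z^(k-1))
        + of_real c * (of_nat m * z^(m-1)))) (at z)"
      unfolding g_def by (auto intro!: derivative_eq_intros)
    then show ?thesis by (simp add: DERIV_imp_deriv mult.assoc)
  qed
  define a where "a j = real (Suc j) * b (Suc j)" for j
  define d where "d j = a j - (if j = k - 1 then real k * bk else 0)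
      + (if j = m - 1 then real k * bk else 0)" for j
  have dnn: "d j \<ge> 0" for j
  proof -
    have "a j \<ge> 0" using bnn[of "Suc j"] by (simp add: a_def)
    moreover have "a (k - 1) = real k * bk" using kpos by (simp add: a_def bk_def)
    ultimately show ?thesis using bkpos kpos mpos km by (auto simp: d_def)
  qed
  have dsums: "(\<lambda>j. of_real (d j) * w^j) sums deriv g w" if w: "w \<in> ball 0 1" for w
  proof -
    have s1: "(\<lambda>j. of_real (a j) * w^j) sums deriv f w"
      using deriv_series[OF hol w] tcr by (simp add: a_def)
    have s2: "(\<lambda>j. if j = k - 1 then of_real (real k * bk) * w^j else 0) sums (of_real (real k * bk) * w^(k-1))"
      using sums_single[of "k-1" "\<lambda>j. of_real (real k * bk) * w^j"] by simp
    have s3: "(\<lambda>j. if j = m - 1 then of_real (real k * bk) * w^j else 0) sums (of_real (real k * bk) * w^(m-1))"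
      using sums_single[of "m-1" "\<lambda>j. of_real (real k * bk) * w^j"] by simp
    have "(\<lambda>j. of_real (a j) * w^j - (if j = k - 1 then of_real (real k * bk) * w^j else 0)
        + (if j = m - 1 then of_real (real k * bk) * w^j else 0))
        sums (deriv f w - of_real (real k * bk) * w^(k-1) + of_real (real k * bk) * w^(m-1))"
      by (intro sums_add sums_diff s1 s2 s3)
    moreover have "deriv f w - of_real (real k * bk) * w^(k-1) + of_real (real k * bk) * w^(m-1) = deriv g w"
    proof -
      have "of_real c * of_nat m = (of_real (real k * bk) :: complex)"
        using cm by (metis of_real_mult of_real_of_nat_eq)
      then show ?thesis using dg[OF w] by (simp add: algebra_simps)
    qed
    moreover have "of_real (a j) * w^j - (if j = k - 1 then of_real (real k * bk) * w^j else 0)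
        + (if j = m - 1 then of_real (real k * bk) * w^j else 0) = of_real (d j) * w^j" for j
      by (simp add: d_def algebra_simps)
    ultimately show ?thesis by simp
  qed
  have key: "(1 - (norm z)\<^sup>2) * norm (deriv g z) \<le> (1 - (norm (complex_of_real (norm z)))\<^sup>2) * norm (deriv f (of_real (norm z)))"
    if z: "z \<in> ball 0 1" for z
  proof -
    define r where "r = norm z"
    have r0: "r \<ge> 0" and r1: "r < 1" using z by (auto simp: r_def)
    have rb: "complex_of_real r \<in> ball 0 1" using r0 r1 by simp
    have "(\<lambda>j. Re (of_real (d j) * (of_real r)^j)) sums Re (deriv g (of_real r))"
      using dsums[OF rb] unfolding sums_complex_iff by (rule conjunct1)
    then have rs: "(\<lambda>j. d j * r^j) sums Re (deriv g (of_real r))"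
      by (simp flip: of_real_power)
    have nrm: "norm (of_real (d j) * z^j) = d j * r^j" for j
      using dnn[of j] by (simp add: norm_mult norm_power r_def)
    have "norm (deriv g z) = norm (\<Sum>j. of_real (d j) * z^j)"
      using dsums[OF z] by (simp add: sums_iff)
    also have "\<dots> \<le> (\<Sum>j. norm (of_real (d j) * z^j))"
      using rs by (intro summable_norm) (simp add: nrm sums_iff)
    also have "\<dots> = Re (deriv g (of_real r))" using rs by (simp add: nrm sums_iff)
    also have "\<dots> = Re (deriv f (of_real r)) - bk * k * r^(k-1) + c * m * r^(m-1)"
      using dg[OF rb] by (simp flip: of_real_power)
    also have "\<dots> \<le> Re (deriv f (of_real r))"
    proof -
      have "r^(m-1) \<le> r^(k-1)" using r0 r1 assms(5) by (intro power_decreasing) auto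
      then show ?thesis using cm bkpos kpos by (simp add: mult_left_mono algebra_simps)
    qed
    also have "\<dots> \<le> norm (deriv f (of_real r))" by (rule complex_Re_le_cmod)
    finally have "norm (deriv g z) \<le> norm (deriv f (of_real r))" .
    moreover have "1 - (norm z)\<^sup>2 \<ge> 0" using z by (simp add: abs_square_le_1 less_imp_le)
    ultimately show ?thesis using r0 by (simp add: r_def mult_left_mono)
  qed
  have bng: "bloch_norm g \<le> 1"
  proof -
    have "(SUP z\<in>ball 0 1. ereal ((1 - (norm z)\<^sup>2) * norm (deriv g z)))
        \<le> (SUP z\<in>ball 0 1. ereal ((1 - (norm z)\<^sup>2) * norm (deriv f z)))"
    proof (rule SUP_least)
      fix z :: complex assume z: "z \<in> ball 0 1"
      have "complex_of_real (norm z) \<in> ball 0 1" using z by simp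
      then have "ereal ((1 - (norm (complex_of_real (norm z)))\<^sup>2) * norm (deriv f (of_real (norm z))))
          \<le> (SUP z\<in>ball 0 1. ereal ((1 - (norm z)\<^sup>2) * norm (deriv f z)))"
        by (rule SUP_upper)
      then show "ereal ((1 - (norm z)\<^sup>2) * norm (deriv g z))
          \<le> (SUP z\<in>ball 0 1. ereal ((1 - (norm z)\<^sup>2) * norm (deriv f z)))"
        using key[OF z] order_trans ereal_less_eq(3) by blast
    qed
    then show ?thesis using bn f0 g0 by (simp add: bloch_norm_def)
  qed
  have "admissible g" using holg g0 coefg bng by (simp add: admissible_def)
  then have Fle: "F_fun n g \<le> F_fun n f" using assms(3) by blast
  have tmeq: "real j * (norm (taylor_coeff g j))\<^sup>2 = real j * (norm (taylor_coeff f j))\<^sup>2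
      + (if j = k then - real k * bk\<^sup>2 else 0) + (if j = m then real m * ((b m + c)\<^sup>2 - (b m)\<^sup>2) else 0)"
    if "j \<in> {1..n}" for j
  proof -
    have j1: "j \<ge> 1" using that by simp
    show ?thesis using km unfolding tcg tcr[OF j1] by (auto simp: bk_def algebra_simps simp flip: of_real_add)
  qed
  have "F_fun n g = F_fun n f + (\<Sum>j=1..n. (if j = k then - real k * bk\<^sup>2 else 0))
      + (\<Sum>j=1..n. (if j = m then real m * ((b m + c)\<^sup>2 - (b m)\<^sup>2) else 0))"
    unfolding F_fun_def by (simp add: tmeq sum.distrib)
  also have "\<dots> = F_fun n f - real k * bk\<^sup>2 + real m * ((b m + c)\<^sup>2 - (b m)\<^sup>2)"
    using assms(4,5,6) by simp
  finally have "real m * ((b m + c)\<^sup>2 - (b m)\<^sup>2) \<le> real k * bk\<^sup>2" using Fle by simp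
  then have "real m * (2 * b m * c + c\<^sup>2) \<le> real k * bk\<^sup>2" by (simp add: power2_eq_square algebra_simps)
  moreover have "real m * (2 * b m * c + c\<^sup>2) = (c * real m) * (2 * b m + c)"
    by (simp add: algebra_simps power2_eq_square)
  ultimately have "real k * bk * (2 * b m + c) \<le> real k * bk * bk"
    unfolding cm by (simp add: power2_eq_square algebra_simps)
  then have "2 * b m + c \<le> bk" using bkpos kpos by simp
  then have "2 * real m * b m + real k * bk \<le> real m * bk"
    using cm mpos by (simp add: algebra_simps) (metis distrib_left mult.commute mult_left_mono of_nat_0_le_iff)
  then have "2 * real m * b m \<le> (real m - real k) * bk" by (simp add: algebra_simps)
  then show ?thesis using mpos by (simp add: b_def bk_def field_simps)
qed

end
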